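(* Let $A\in\mathbb{R}^{n\times n}$ have all rows of Euclidean norm $1$. Then the matrix $$B=\frac{1}{\sqrt{\beta(A)^2+1}}\begin{bmatrix}\beta(A)\,A & I_n\\ \beta(A)\,A & -I_n\end{bmatrix}\in\mathbb{R}^{2n\times 2n}$$ has all rows of Euclidean norm $1$ and satisfies $\beta(B)=\sqrt{\beta(A)^2+1}$.
   Context: For $A\in\mathbb{R}^{m\times n}$, $\beta(A)=\frac{1}{2^n}\sum_{x\in\{-1,1\}^n}\|Ax\|_\infty$. $I_n$ is the $n\times n$ identity matrix. *)

theory Defs
  imports "HOL-Analysis.Analysis"
begin

text \<open>Matrices of size m x n are represented as functions nat => nat => real,
  only the entries with row index < m and column index < n being relevant.
  Sign vectors in {-1,1}^n are the extensional functions in PiE {..<n} (\<lambda>_. {-1,1}).\<close>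

definition inf_norm_vec :: "nat \<Rightarrow> (nat \<Rightarrow> real) \<Rightarrow> real" where
  "inf_norm_vec m y = Max (insert 0 ((\<lambda>i. \<bar>y i\<bar>) ` {..<m}))"

definition mat_vec :: "nat \<Rightarrow> (nat \<Rightarrow> nat \<Rightarrow> real) \<Rightarrow> (nat \<Rightarrow> real) \<Rightarrow> (nat \<Rightarrow> real)" where
  "mat_vec n A x = (\<lambda>i. \<Sum>j<n. A i j * x j)"

definition beta :: "nat \<Rightarrow> nat \<Rightarrow> (nat \<Rightarrow> nat \<Rightarrow> real) \<Rightarrow> real" where
  "beta m n A = (\<Sum>x\<in>PiE {..<n} (\<lambda>_. {-1, 1::real}). inf_norm_vec m (mat_vec n A x)) / 2 ^ n"

definition row_norm :: "nat \<Rightarrow> (nat \<Rightarrow> nat \<Rightarrow> real) \<Rightarrow> nat \<Rightarrow> real" where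
  "row_norm n A i = sqrt (\<Sum>j<n. (A i j)\<^sup>2)"

definition blockB :: "nat \<Rightarrow> (nat \<Rightarrow> nat \<Rightarrow> real) \<Rightarrow> (nat \<Rightarrow> nat \<Rightarrow> real)" where
  "blockB n A = (let b = beta n n A in
     (\<lambda>i j. (1 / sqrt (b\<^sup>2 + 1)) *
       (if i < n then
          (if j < n then b * A i j else (if j - n = i then 1 else 0))
        else
          (if j < n then b * A (i - n) j else (if j - n = i - n then -1 else 0)))))"

end

theory Submission
  imports Defs
begin

lemma sum_split_add: "(\<Sum>j<n+m. f j) = (\<Sum>j<n. f j) + (\<Sum>j<m. f (n+j::nat)::real)"
  by (induction m) auto

lemma sum_PiE_ext:
  fixes F :: "(nat \<Rightarrow> real) \<Rightarrow> real"
  assumes dep: "\<And>x x'. (\<forall>j<n. x j = x' j) \<Longrightarrow> F x = F x'"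
  shows "(\<Sum>x\<in>PiE {..<n+k} (\<lambda>_. {-1,1::real}). F x) = 2^k * (\<Sum>x\<in>PiE {..<n} (\<lambda>_. {-1,1::real}). F x)"
proof (induction k)
  case 0 then show ?case by simp
next
  case (Suc k)
  let ?T = "(\<lambda>_::nat. {-1,1::real})"
  have ins: "{..<n + Suc k} = insert (n+k) {..<n+k}" by auto
  have nin: "n+k \<notin> {..<n+k}" by simp
  have "(\<Sum>x\<in>PiE {..<n+Suc k} ?T. F x)
      = (\<Sum>x\<in>(\<lambda>(y, g). g(n+k := y)) ` (?T (n+k) \<times> PiE {..<n+k} ?T). F x)"
    unfolding ins PiE_insert_eq ..
  also have "\<dots> = (\<Sum>p\<in>?T (n+k) \<times> PiE {..<n+k} ?T. F ((\<lambda>(y, g). g(n+k := y)) p))"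
    by (subst sum.reindex[OF inj_combinator[OF nin]]) (simp add: comp_def)
  also have "\<dots> = (\<Sum>(y,g)\<in>?T (n+k) \<times> PiE {..<n+k} ?T. F g)"
  proof (rule sum.cong[OF refl])
    fix p assume "p \<in> ?T (n+k) \<times> PiE {..<n+k} ?T"
    obtain y g where p: "p = (y,g)" by (cases p)
    have "F (g(n+k := y)) = F g" by (rule dep) simp
    then show "F ((\<lambda>(y, g). g(n+k := y)) p) = (\<lambda>(y,g). F g) p" unfolding p by simp
  qed
  also have "\<dots> = (\<Sum>y\<in>?T (n+k). \<Sum>g\<in>PiE {..<n+k} ?T. F g)"
    by (rule sum.cartesian_product[symmetric])
  also have "\<dots> = 2 * (\<Sum>x\<in>PiE {..<n+k} ?T. F x)"
    by (simp only: sum_constant) simp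
  finally show ?case using Suc by simp
qed

lemma beta_nonneg: "beta m n A \<ge> 0"
proof -
  have "0 \<le> inf_norm_vec m y" for y
    unfolding inf_norm_vec_def by (rule Max_ge) auto
  then show ?thesis unfolding beta_def by (intro divide_nonneg_pos sum_nonneg) auto
qed

theorem theorem2:
  fixes n :: nat and A :: "nat \<Rightarrow> nat \<Rightarrow> real"
  assumes "n \<ge> 1"
    and "\<forall>i<n. row_norm n A i = 1"
  shows "(\<forall>i<2*n. row_norm (2*n) (blockB n A) i = 1)
       \<and> beta (2*n) (2*n) (blockB n A) = sqrt ((beta n n A)\<^sup>2 + 1)"
proof -
  define b where "b = beta n n A"
  define c where "c = 1 / sqrt (b\<^sup>2 + 1)"
  define B where "B = blockB n A"
  have b0: "b \<ge> 0" unfolding b_def by (rule beta_nonneg)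
  have bp: "b\<^sup>2 + 1 > 0" by (smt (verit) zero_le_power2)
  have cpos: "c > 0" unfolding c_def using bp by simp
  have c2: "c^2 * (b^2 + 1) = 1" unfolding c_def
    using bp by (simp add: power_divide)
  have B1: "B i j = c*b*A i j" if "i<n" "j<n" for i j
    using that unfolding B_def blockB_def b_def[symmetric] c_def[symmetric] Let_def by simp
  have B2: "B i (n+j) = c*(if j=i then 1 else 0)" if "i<n" for i j
    using that unfolding B_def blockB_def b_def[symmetric] c_def[symmetric] Let_def by simp
  have B3: "B (n+i) j = c*b*A i j" if "j<n" for i j
    using that unfolding B_def blockB_def b_def[symmetric] c_def[symmetric] Let_def by simp
  have B4: "B (n+i) (n+j) = c*(if j=i then -1 else 0)" for i j
    unfolding B_def blockB_def b_def[symmetric] c_def[symmetric] Let_def by simp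
  have rs: "(\<Sum>j<n. (A i j)\<^sup>2) = 1" if "i<n" for i
  proof -
    have "sqrt (\<Sum>j<n. (A i j)\<^sup>2) = 1" using assms(2) that unfolding row_norm_def by simp
    then show ?thesis by simp
  qed
  have two: "2*n = n+n" by simp
  have part1: "row_norm (2*n) B i = 1" if "i<2*n" for i
  proof -
    obtain k where k: "k<n" "i = k \<or> i = n+k" using \<open>i<2*n\<close>
      by (metis add_diff_inverse_nat add_less_imp_less_left two)
    have "(\<Sum>j<2*n. (B i j)\<^sup>2) = c^2*b^2*(\<Sum>j<n. (A k j)\<^sup>2) + c^2"
    proof -
      have e: "(\<Sum>j<n. (B i (n+j))\<^sup>2) = c^2"
        using k by (auto simp: B2 B4 power2_eq_square if_distrib cong: if_cong)
      have f: "(\<Sum>j<n. (B i j)\<^sup>2) = c^2*b^2*(\<Sum>j<n. (A k j)\<^sup>2)"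
        using k by (auto simp: B1 B3 sum_distrib_left power_mult_distrib intro!: sum.cong)
      show ?thesis unfolding two sum_split_add e f ..
    qed
    also have "\<dots> = 1" using rs[OF k(1)] c2 by (simp add: algebra_simps)
    finally show ?thesis unfolding row_norm_def by simp
  qed
  define F where "F x = inf_norm_vec n (mat_vec n A x)" for x
  have norm: "inf_norm_vec (2*n) (mat_vec (2*n) B x) = c*(b*F x + 1)"
    if x: "x \<in> PiE {..<2*n} (\<lambda>_. {-1,1::real})" for x
  proof -
    define a where "a = mat_vec n A x"
    have xv: "x (n+k) = 1 \<or> x (n+k) = -1" if "k<n" for k using x that by (auto simp: PiE_iff)
    have mv1: "mat_vec (2*n) B x k = c*(b*a k + x (n+k))" if "k<n" for k
    proof -
      have "(\<Sum>j<n. B k (n+j) * x (n+j)) = (\<Sum>j<n. if j = k then c * x (n+j) else 0)"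
        using that by (intro sum.cong) (auto simp: B2)
      then have "(\<Sum>j<n. B k (n+j) * x (n+j)) = c * x (n+k)" using that by simp
      moreover have "(\<Sum>j<n. B k j * x j) = c*b*a k"
        using that by (simp add: B1 a_def mat_vec_def sum_distrib_left mult.assoc)
      ultimately show ?thesis unfolding mat_vec_def two sum_split_add by (simp add: algebra_simps)
    qed
    have mv2: "mat_vec (2*n) B x (n+k) = c*(b*a k - x (n+k))" if "k<n" for k
    proof -
      have "(\<Sum>j<n. B (n+k) (n+j) * x (n+j)) = (\<Sum>j<n. if j = k then - c * x (n+j) else 0)"
        using that by (intro sum.cong) (auto simp: B4)
      then have "(\<Sum>j<n. B (n+k) (n+j) * x (n+j)) = - c * x (n+k)" using that by simp
      moreover have "(\<Sum>j<n. B (n+k) j * x j) = c*b*a k"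
        by (simp add: B3 a_def mat_vec_def sum_distrib_left mult.assoc)
      ultimately show ?thesis unfolding mat_vec_def two sum_split_add by (simp add: algebra_simps)
    qed
    have Fx: "F x = Max (insert 0 ((\<lambda>i. \<bar>a i\<bar>) ` {..<n}))"
      unfolding F_def a_def inf_norm_vec_def ..
    have Fge: "\<bar>a k\<bar> \<le> F x" if "k<n" for k unfolding Fx using that by (auto intro: Max_ge)
    have F0: "F x \<ge> 0" unfolding Fx by (auto intro: Max_ge)
    obtain k where k: "k<n" "F x = \<bar>a k\<bar>"
    proof -
      have "F x \<in> insert 0 ((\<lambda>i. \<bar>a i\<bar>) ` {..<n})" unfolding Fx by (intro Max_in) auto
      moreover have "F x \<ge> \<bar>a 0\<bar>" using Fge assms(1) by simp
      ultimately show ?thesis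
      proof (cases "F x = 0")
        case True
        then have "F x = \<bar>a 0\<bar>" using \<open>F x \<ge> \<bar>a 0\<bar>\<close> by simp
        then show ?thesis using that[of 0] assms(1) by simp
      next
        case False
        then obtain k where "k < n" "F x = \<bar>a k\<bar>" using \<open>F x \<in> _\<close> by auto
        then show ?thesis using that by blast
      qed
    qed
    let ?S = "insert 0 ((\<lambda>i. \<bar>mat_vec (2*n) B x i\<bar>) ` {..<2*n})"
    have ub: "y \<le> c*(b*F x + 1)" if "y \<in> ?S" for y
    proof -
      have pos: "0 \<le> c*(b*F x + 1)" using cpos b0 F0 by simp
      { fix i assume i: "i < 2*n"
        obtain j where j: "j<n" "i = j \<or> i = n+j" using i
          by (metis add_diff_inverse_nat add_less_imp_less_left two)
        have bnd: "\<bar>b*a j + s\<bar> \<le> b*F x + 1" if "\<bar>s\<bar> = 1" for s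
        proof -
          have "\<bar>b*a j + s\<bar> \<le> b*\<bar>a j\<bar> + 1" using b0 that
            by (metis abs_mult abs_of_nonneg abs_triangle_ineq)
          also have "\<dots> \<le> b * F x + 1" using Fge[OF j(1)] b0 by (simp add: mult_left_mono)
          finally show ?thesis .
        qed
        have "\<bar>mat_vec (2*n) B x i\<bar> \<le> c*(b*F x + 1)"
        proof (cases "i = j")
          case True
          have "\<bar>b*a j + x (n+j)\<bar> \<le> b*F x + 1" using xv[OF j(1)] by (intro bnd) auto
          then show ?thesis using True mv1[OF j(1)] cpos
            by (simp add: abs_mult mult_left_mono)
        next
          case False
          then have "i = n+j" using j by simp
          have "\<bar>b*a j + (- x (n+j))\<bar> \<le> b*F x + 1" using xv[OF j(1)] by (intro bnd) auto
          then show ?thesis using \<open>i = n+j\<close> mv2[OF j(1)] cpos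
            by (simp add: abs_mult mult_left_mono)
        qed }
      then show ?thesis using that pos by auto
    qed
    have att: "c*(b*F x + 1) \<in> ?S"
    proof -
      have ge: "\<bar>b*a k + s\<bar> = b*F x + 1" if "(a k \<noteq> 0 \<and> s = sgn (a k)) \<or> (a k = 0 \<and> \<bar>s\<bar> = 1)" for s
      proof -
        have p: "a k > 0 \<Longrightarrow> b * a k \<ge> 0" using b0 by simp
        have q: "a k < 0 \<Longrightarrow> b * a k \<le> 0" using b0 by (simp add: mult_nonneg_nonpos)
        show ?thesis
        proof (cases "a k > 0")
          case True then show ?thesis using that p k(2) by (auto simp: sgn_if)
        next
          case False
          show ?thesis
          proof (cases "a k < 0")
            case True then show ?thesis using that q k(2) by (auto simp: sgn_if)
          next
            case False then have "a k = 0" using \<open>\<not> a k > 0\<close> by simp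
            then show ?thesis using that k(2) by (auto simp: sgn_if)
          qed
        qed
      qed
      have "\<exists>i<2*n. \<bar>mat_vec (2*n) B x i\<bar> = c*(b*F x + 1)"
      proof (cases "x (n+k) = sgn (a k) \<or> a k = 0")
        case True
        have "\<bar>b*a k + x (n+k)\<bar> = b*F x + 1" using True xv[OF k(1)] by (intro ge) auto
        then show ?thesis using mv1[OF k(1)] cpos k(1) by (intro exI[of _ k]) (simp add: abs_mult)
      next
        case False
        then have "- x (n+k) = sgn (a k)" using xv[OF k(1)]
          by (cases "a k > 0"; auto simp: sgn_if)
        then have "\<bar>b*a k + (- x (n+k))\<bar> = b*F x + 1" using False by (intro ge) auto
        then show ?thesis using mv2[OF k(1)] cpos k(1) by (intro exI[of _ "n+k"]) (simp add: abs_mult)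
      qed
      then show ?thesis by force
    qed
    show ?thesis unfolding inf_norm_vec_def by (rule Max_eqI) (use ub att in auto)
  qed
  have dep: "F x = F x'" if "\<forall>j<n. x j = x' j" for x x'
    unfolding F_def mat_vec_def using that by simp
  have cardP: "card (PiE {..<n} (\<lambda>_. {-1,1::real})) = 2^n" by (simp add: card_PiE numeral_2_eq_2)
  have sumF: "(\<Sum>x\<in>PiE {..<n} (\<lambda>_. {-1,1::real}). F x) = 2^n * b"
    unfolding b_def beta_def F_def by simp
  have "beta (2*n) (2*n) B = (\<Sum>x\<in>PiE {..<2*n} (\<lambda>_. {-1,1::real}). c*(b*F x + 1)) / 2^(2*n)"
    unfolding beta_def by (simp add: norm cong: sum.cong)
  also have "(\<Sum>x\<in>PiE {..<2*n} (\<lambda>_. {-1,1::real}). c*(b*F x + 1))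
      = 2^n * (\<Sum>x\<in>PiE {..<n} (\<lambda>_. {-1,1::real}). c*(b*F x + 1))"
    unfolding two by (rule sum_PiE_ext) (simp add: dep)
  also have "(\<Sum>x\<in>PiE {..<n} (\<lambda>_. {-1,1::real}). c*(b*F x + 1)) = c*(b*(2^n*b) + 2^n)"
  proof -
    have "(\<Sum>x\<in>PiE {..<n} (\<lambda>_. {-1,1::real}). c*(b*F x + 1))
        = (\<Sum>x\<in>PiE {..<n} (\<lambda>_. {-1,1::real}). (c*b)*F x + c)"
      by (rule sum.cong) (simp_all add: distrib_left mult.assoc)
    also have "\<dots> = (c*b) * (\<Sum>x\<in>PiE {..<n} (\<lambda>_. {-1,1::real}). F x)
        + c * real (card (PiE {..<n} (\<lambda>_. {-1,1::real})))"
      by (simp only: sum.distrib sum_distrib_left[symmetric] sum_constant) simp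
    also have "\<dots> = c*(b*(2^n*b) + 2^n)" unfolding sumF cardP
      by (simp add: algebra_simps)
    finally show ?thesis .
  qed
  finally have "beta (2*n) (2*n) B = (2^n * (c*(b*(2^n*b) + 2^n))) / 2^(2*n)" .
  also have "\<dots> = c*(b^2+1)"
  proof -
    have e: "(2::real)^(2*n) = 2^n*2^n" by (simp add: mult_2 power_add)
    have h: "(2::real)^n * (c*(b*(2^n*b) + 2^n)) = (2^n*2^n) * (c*(b^2+1))"
      by (simp add: power2_eq_square algebra_simps)
    moreover have ne: "(2::real)^n*2^n \<noteq> 0" by simp
    show ?thesis unfolding e h using ne by (rule nonzero_mult_div_cancel_left)
  qed
  also have "\<dots> = sqrt (b^2+1)" unfolding c_def
    using bp by (simp add: real_div_sqrt)
  finally have fin: "beta (2*n) (2*n) B = sqrt (b^2+1)" .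
  show ?thesis unfolding B_def[symmetric] b_def[symmetric] using part1 fin by blast
qed

end
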